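(* Let $p=p_1\otimes\cdots\otimes p_L\in B_{\lambda_1}\otimes\cdots\otimes B_{\lambda_L}$ be any state, and write $\rho_{k,d}=\rho_{k,d}(p)$ and $\bar\rho_{k,d}=\rho_{k,d}(T_\infty(p))$. Then for all $1\le k\le L$ and $2\le d\le n+1$, $$\bar\rho_{k,d-1}+\rho_{k-1,d}=\max\big(\bar\rho_{k,d}+\rho_{k-1,d-1},\ \bar\rho_{k-1,d-1}+\rho_{k,d}-\lambda_k\big).$$
   Context: Fix $n\ge1$. For $l\ge1$ let $B_l=\{x=(x_1,\dots,x_{n+1})\in\mathbb Z_{\ge0}^{n+1}: \sum_i x_i=l\}$ and $u_l=(l,0,\dots,0)\in B_l$. Indices of $x$ are read modulo $n+1$. For $x\in B_l,y\in B_m$ and $i\in\mathbb Z$ put $Q_i(x\otimes y)=\min_{1\le k\le n+1}\big(\sum_{j=1}^{k-1}x_{i+j}+\sum_{j=k+1}^{n+1}y_{i+j}\big)$ (so $Q_{n+1}=Q_0$) and $H(x\otimes y)=\min(l,m)-Q_0(x\otimes y)$. The combinatorial $R$ is the map $B_l\otimes B_m\to B_m\otimes B_l$, $x\otimes y\mapsto\tilde y\otimes\tilde x$, $\tilde x_i=x_i+Q_i-Q_{i-1}$, $\tilde y_i=y_i+Q_{i-1}-Q_i$ ($Q_j=Q_j(x\otimes y)$); write $x\otimes y\simeq\tilde y\otimes\tilde x$, and extend $\simeq$ to tensor products by applying $R$ to adjacent factors. Box-ball system: a state is $p=p_1\otimes\cdots\otimes p_L\in B_{\lambda_1}\otimes\cdots\otimes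 B_{\lambda_L}$ ($\lambda_j\ge1$). For $l\ge1$ let $v_0=u_l$ and recursively $v_{j-1}\otimes p_j\simeq p'_j\otimes v_j$ ($1\le j\le L$); then $T_l(p)=p'_1\otimes\cdots\otimes p'_L$. For all sufficiently large $l$, $T_l(p)$ is independent of $l$; this is $T_\infty(p)$. Writing $T_\infty^t(p)=p^t_1\otimes\cdots\otimes p^t_L$, $p^t_j=(x^t_{j,1},\dots,x^t_{j,n+1})$, define for $0\le k\le L$, $1\le d\le n+1$: $\rho_{k,d}(p)=\sum_{j=1}^k(x^0_{j,2}+\cdots+x^0_{j,d})+\sum_{t\ge1}\sum_{j=1}^k(x^t_{j,2}+\cdots+x^t_{j,n+1})$ (a finite sum), and $\rho_{k,0}(p)=\rho_{k,n+1}(p)-(\lambda_1+\cdots+\lambda_k)$. *)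

theory Defs
  imports Main
begin

(* An element x of B_l (for fixed n) is a list of n+1 naturals with sum l;
   component x_i (1-based, index read mod n+1) as an integer. *)
definition comp :: "nat \<Rightarrow> nat list \<Rightarrow> int \<Rightarrow> int" where
  "comp n x i = int (x ! nat ((i - 1) mod int (n + 1)))"

definition Qf :: "nat \<Rightarrow> int \<Rightarrow> nat list \<Rightarrow> nat list \<Rightarrow> int" where
  "Qf n i x y = Min ((\<lambda>k. (\<Sum>j = 1..k - 1. comp n x (i + int j))
                         + (\<Sum>j = k + 1..n + 1. comp n y (i + int j))) ` {1..n + 1})"

(* combinatorial R: x \<otimes> y \<mapsto> ytilde \<otimes> xtilde, returned as the pair (ytilde, xtilde) *)
definition Rmap :: "nat \<Rightarrow> nat list \<Rightarrow> nat list \<Rightarrow> nat list \<times> nat list" where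
  "Rmap n x y =
     (map (\<lambda>i. nat (comp n y (int i) + Qf n (int i - 1) x y - Qf n (int i) x y)) [1..<n + 2],
      map (\<lambda>i. nat (comp n x (int i) + Qf n (int i) x y - Qf n (int i - 1) x y)) [1..<n + 2])"

definition uvac :: "nat \<Rightarrow> nat \<Rightarrow> nat list" where
  "uvac n l = l # replicate n 0"

(* carrier passing: v_{j-1} \<otimes> p_j \<simeq> p'_j \<otimes> v_j *)
fun Tcar :: "nat \<Rightarrow> nat list \<Rightarrow> nat list list \<Rightarrow> nat list list" where
  "Tcar n v [] = []"
| "Tcar n v (p # ps) = (case Rmap n v p of (p', v') \<Rightarrow> p' # Tcar n v' ps)"

definition Tl :: "nat \<Rightarrow> nat \<Rightarrow> nat list list \<Rightarrow> nat list list" where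
  "Tl n l ps = Tcar n (uvac n l) ps"

definition Tinf :: "nat \<Rightarrow> nat list list \<Rightarrow> nat list list" where
  "Tinf n ps = (THE q. \<exists>l0. \<forall>l\<ge>l0. Tl n l ps = q)"

definition xt :: "nat \<Rightarrow> nat list list \<Rightarrow> nat \<Rightarrow> nat \<Rightarrow> nat \<Rightarrow> int" where
  "xt n ps t j i = int (((Tinf n ^^ t) ps) ! (j - 1) ! (i - 1))"

definition rho_term :: "nat \<Rightarrow> nat list list \<Rightarrow> nat \<Rightarrow> nat \<Rightarrow> int" where
  "rho_term n ps k t = (\<Sum>j = 1..k. \<Sum>i = 2..n + 1. xt n ps t j i)"

definition rho :: "nat \<Rightarrow> nat list list \<Rightarrow> nat \<Rightarrow> nat \<Rightarrow> int" where
  "rho n ps k d =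
     (if d = 0 then
        ((\<Sum>j = 1..k. \<Sum>i = 2..n + 1. xt n ps 0 j i)
          + (\<Sum>t \<in> {t. 1 \<le> t \<and> rho_term n ps k t \<noteq> 0}. rho_term n ps k t))
        - (\<Sum>j = 1..k. int (sum_list (ps ! (j - 1))))
      else
        (\<Sum>j = 1..k. \<Sum>i = 2..d. xt n ps 0 j i)
          + (\<Sum>t \<in> {t. 1 \<le> t \<and> rho_term n ps k t \<noteq> 0}. rho_term n ps k t))"

end

theory Submission
  imports Defs
begin


definition tmf :: "nat \<Rightarrow> int \<Rightarrow> nat list \<Rightarrow> nat list \<Rightarrow> nat \<Rightarrow> int" where
  "tmf n i x y k = (\<Sum>j = 1..k - 1. comp n x (i + int j)) + (\<Sum>j = k + 1..n + 1. comp n y (i + int j))"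

lemma Qf_tmf: "Qf n i x y = Min (tmf n i x y ` {1..n+1})"
  by (simp add: Qf_def tmf_def)

lemma Q_le: "k \<in> {1..n+1} \<Longrightarrow> Qf n i x y \<le> tmf n i x y k"
  unfolding Qf_tmf by (rule Min_le) auto

lemma Q_ex: "\<exists>k\<in>{1..n+1}. Qf n i x y = tmf n i x y k"
proof -
  have "Min (tmf n i x y ` {1..n+1}) \<in> tmf n i x y ` {1..n+1}"
    by (rule Min_in) auto
  then show ?thesis unfolding Qf_tmf by (metis imageE)
qed

lemma comp_nonneg: "0 \<le> comp n x i"
  by (simp add: comp_def)

lemma comp_per: "comp n x (i + int (n+1)) = comp n x i"
proof -
  have "(i + int (n+1) - 1) mod int (n+1) = (i - 1) mod int (n+1)"
    by (metis add_diff_eq mod_add_self2 diff_add_eq)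
  then show ?thesis by (simp add: comp_def)
qed

lemma comp_nth: "i < n+1 \<Longrightarrow> comp n x (int (Suc i)) = int (x ! i)"
  by (simp add: comp_def)

lemma sum_shift1:
  assumes "1 \<le> k"
  shows "(\<Sum>j=1..k. f (i - 1 + int j)) = f i + (\<Sum>j=1..k-1. f (i + int j))"
proof -
  have "(\<Sum>j=1..k. f (i - 1 + int j)) = f (i - 1 + 1) + (\<Sum>j=Suc 1..Suc (k-1). f (i - 1 + int j))"
    using assms by (simp add: sum.atLeast_Suc_atMost)
  also have "(\<Sum>j=Suc 1..Suc (k-1). f (i - 1 + int j)) = (\<Sum>j=1..k-1. f (i - 1 + int (Suc j)))"
    by (rule sum.shift_bounds_cl_Suc_ivl)
  finally show ?thesis by simp
qed

lemma sum_shift2: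
  "(\<Sum>j=Suc (Suc m)..Suc n. f (i - 1 + int j)) = (\<Sum>j=Suc m..n. f (i + int j))"
  by (subst sum.shift_bounds_cl_Suc_ivl) simp

lemma tmf_shift:
  assumes "1 \<le> k" "k \<le> n"
  shows "tmf n (i - 1) x y (k + 1) + comp n y i = comp n x i + tmf n i x y k"
proof -
  have a: "(\<Sum>j=1..k. comp n x (i - 1 + int j)) = comp n x i + (\<Sum>j=1..k-1. comp n x (i + int j))"
    using assms(1) by (rule sum_shift1)
  have b: "(\<Sum>j=Suc (Suc k)..Suc n. comp n y (i - 1 + int j)) = (\<Sum>j=Suc k..n. comp n y (i + int j))"
    by (rule sum_shift2)
  have c: "(\<Sum>j=Suc k..Suc n. comp n y (i + int j)) = (\<Sum>j=Suc k..n. comp n y (i + int j)) + comp n y i"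
    using assms comp_per[of n y i] by (simp add: add.commute)
  show ?thesis using a b c unfolding tmf_def by simp
qed

lemma full_sum_shift:
  "(\<Sum>j=1..n+1. comp n y (i + 1 + int j)) = (\<Sum>j=1..n+1. comp n y (i + int j))"
proof -
  have "(\<Sum>j=1..n+1. comp n y (i + 1 - 1 + int j)) = comp n y (i+1) + (\<Sum>j=1..n. comp n y (i + 1 + int j))"
    using sum_shift1[of "n+1" "comp n y" "i+1"] by simp
  moreover have "(\<Sum>j=1..n+1. comp n y (i + 1 + int j)) = (\<Sum>j=1..n. comp n y (i + 1 + int j)) + comp n y (i+1)"
    using comp_per[of n y "i+1"] by (simp add: add.commute add.left_commute)
  ultimately show ?thesis by simp
qed

lemma full_sum:
  assumes "length y = n+1"
  shows "(\<Sum>j=1..n+1. comp n y (i + int j)) = int (sum_list y)"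
proof -
  have h: "(\<Sum>j=1..n+1. comp n y (i + int j)) = (\<Sum>j=1..n+1. comp n y (0 + int j))" for i
  proof (induction i rule: int_induct[where k=0])
    case base then show ?case by simp
  next
    case (step1 i) then show ?case using full_sum_shift[of n y i] by simp
  next
    case (step2 i) then show ?case using full_sum_shift[of n y "i-1"] by simp
  qed
  have "(\<Sum>j=1..n+1. comp n y (0 + int j)) = (\<Sum>j<n+1. comp n y (int (Suc j)))"
    using sum.atLeast1_atMost_eq[of "\<lambda>j. comp n y (int j)" "n+1"] by simp
  also have "\<dots> = (\<Sum>j<n+1. int (y ! j))"
    by (rule sum.cong) (auto simp: comp_def)
  also have "\<dots> = int (sum_list y)"
    using assms by (simp add: sum_list_sum_nth atLeast0LessThan)
  finally show ?thesis using h by simp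
qed

lemma tmf_nonneg: "0 \<le> tmf n i x y k"
  unfolding tmf_def by (intro add_nonneg_nonneg sum_nonneg) (auto simp: comp_nonneg)

lemma Q_nonneg: "0 \<le> Qf n i x y"
  using Q_ex[of n i x y] tmf_nonneg by metis

lemma tmf_1_le:
  assumes "length y = n+1"
  shows "tmf n i x y 1 \<le> int (sum_list y)"
proof -
  have "(\<Sum>j=1..n+1. comp n y (i + int j)) = comp n y (i + 1) + (\<Sum>j=Suc 1..n+1. comp n y (i + int j))"
    by (simp add: sum.atLeast_Suc_atMost)
  then show ?thesis using full_sum[OF assms, of i] comp_nonneg[of n y "i+1"]
    unfolding tmf_def by simp
qed

lemma Q_leM:
  assumes "length y = n+1"
  shows "Qf n i x y \<le> int (sum_list y)"
  using Q_le[of 1 n i x y] tmf_1_le[OF assms, of i x] by simp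

lemma tmf_first:
  assumes "length y = n+1"
  shows "tmf n (i - 1) x y 1 + comp n y i = int (sum_list y)"
proof -
  have "tmf n (i - 1) x y 1 = (\<Sum>j=Suc (Suc 0)..Suc n. comp n y (i - 1 + int j))"
    unfolding tmf_def by simp
  also have "\<dots> = (\<Sum>j=Suc 0..n. comp n y (i + int j))"
    by (rule sum_shift2)
  finally have a: "tmf n (i - 1) x y 1 = (\<Sum>j=1..n. comp n y (i + int j))" by simp
  have "(\<Sum>j=1..n+1. comp n y (i + int j)) = (\<Sum>j=1..n. comp n y (i + int j)) + comp n y i"
    using comp_per[of n y i] by (simp add: add.commute)
  then show ?thesis using a full_sum[OF assms, of i] by simp
qed

lemma tmf_last:
  assumes "length x = n+1"
  shows "tmf n i x y (n+1) + comp n x i = int (sum_list x)"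
proof -
  have a: "tmf n i x y (n+1) = (\<Sum>j=1..n. comp n x (i + int j))"
    unfolding tmf_def by simp
  have "(\<Sum>j=1..n+1. comp n x (i + int j)) = (\<Sum>j=1..n. comp n x (i + int j)) + comp n x i"
    using comp_per[of n x i] by (simp add: add.commute)
  then show ?thesis using a full_sum[OF assms, of i] by simp
qed

lemma QA:
  assumes n1: "1 \<le> n" and lx: "length x = n+1" and ly: "length y = n+1"
    and xy: "sum_list y \<le> sum_list x"
  shows "Qf n (i - 1) x y + comp n y i = min (int (sum_list y)) (comp n x i + Qf n i x y)"
proof (rule antisym)
  have u1: "Qf n (i - 1) x y + comp n y i \<le> int (sum_list y)"
    using Q_le[of 1 n "i - 1" x y] tmf_first[OF ly, of i x] by simp
  obtain k0 where k0: "k0 \<in> {1..n+1}" "Qf n i x y = tmf n i x y k0" using Q_ex by blast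
  have u2: "Qf n (i - 1) x y + comp n y i \<le> comp n x i + Qf n i x y"
  proof (cases "k0 \<le> n")
    case True
    then have "Qf n (i - 1) x y \<le> tmf n (i - 1) x y (k0 + 1)" using k0 by (intro Q_le) auto
    then show ?thesis using tmf_shift[of k0 n i x y] k0 True by simp
  next
    case False
    then have "k0 = n+1" using k0 by auto
    then show ?thesis using tmf_last[OF lx, of i y] k0 u1 xy by simp
  qed
  show "Qf n (i - 1) x y + comp n y i \<le> min (int (sum_list y)) (comp n x i + Qf n i x y)"
    using u1 u2 by simp
next
  obtain k1 where k1: "k1 \<in> {1..n+1}" "Qf n (i - 1) x y = tmf n (i - 1) x y k1" using Q_ex by blast
  show "min (int (sum_list y)) (comp n x i + Qf n i x y) \<le> Qf n (i - 1) x y + comp n y i"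
  proof (cases "k1 = 1")
    case True
    then show ?thesis using k1 tmf_first[OF ly, of i x] by simp
  next
    case False
    define k where "k = k1 - 1"
    have k: "k1 = k + 1" "1 \<le> k" "k \<le> n" using k1 False unfolding k_def by auto
    have "Qf n i x y \<le> tmf n i x y k" using k by (intro Q_le) auto
    then show ?thesis using k1 k tmf_shift[of k n i x y] by simp
  qed
qed



definition good :: "nat \<Rightarrow> nat list \<Rightarrow> nat list \<Rightarrow> bool" where
  "good n v p \<longleftrightarrow> 1 \<le> n \<and> length v = n+1 \<and> length p = n+1 \<and> sum_list p \<le> v ! 0"

lemma good_sum: "good n v p \<Longrightarrow> sum_list p \<le> sum_list v"
  unfolding good_def using elem_le_sum_list[of 0 v] by auto

lemma QA_good: "good n v p \<Longrightarrow>
   Qf n (i - 1) v p + comp n p i = min (int (sum_list p)) (comp n v i + Qf n i v p)"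
  using QA good_sum unfolding good_def by blast

lemma Qf_per: "Qf n (i + int (n+1)) x y = Qf n i x y"
proof -
  have c: "comp n z (i + int (n+1) + int j) = comp n z (i + int j)" for z j
    using comp_per[of n z "i + int j"] by (simp add: ac_simps)
  have "tmf n (i + int (n+1)) x y = tmf n i x y"
    by (rule ext) (simp only: tmf_def c)
  then show ?thesis by (simp add: Qf_tmf)
qed

lemma fst_Rmap_nth: "i < n+1 \<Longrightarrow> fst (Rmap n v p) ! i
   = nat (comp n p (int (Suc i)) + Qf n (int i) v p - Qf n (int (Suc i)) v p)"
  by (simp add: Rmap_def del: upt_Suc)

lemma snd_Rmap_nth: "i < n+1 \<Longrightarrow> snd (Rmap n v p) ! i
   = nat (comp n v (int (Suc i)) + Qf n (int (Suc i)) v p - Qf n (int i) v p)"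
  by (simp add: Rmap_def del: upt_Suc)

lemma length_Rmap: "length (fst (Rmap n v p)) = n+1" "length (snd (Rmap n v p)) = n+1"
  by (simp_all add: Rmap_def)

lemma q_int:
  assumes g: "good n v p" and i: "i < n+1"
  shows "int (fst (Rmap n v p) ! i) = int (p ! i) + Qf n (int i) v p - Qf n (int (Suc i)) v p"
proof -
  have "Qf n (int (Suc i) - 1) v p + comp n p (int (Suc i)) = min (int (sum_list p)) (comp n v (int (Suc i)) + Qf n (int (Suc i)) v p)"
    by (rule QA_good[OF g])
  moreover have "Qf n (int (Suc i)) v p \<le> int (sum_list p)" using Q_leM g unfolding good_def by blast
  moreover have "0 \<le> comp n v (int (Suc i))" by (rule comp_nonneg)
  ultimately show ?thesis using fst_Rmap_nth[OF i] comp_nth[OF i] by simp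
qed

lemma v_int:
  assumes g: "good n v p" and i: "i < n+1"
  shows "int (snd (Rmap n v p) ! i) = int (v ! i) + Qf n (int (Suc i)) v p - Qf n (int i) v p"
proof -
  have "Qf n (int (Suc i) - 1) v p + comp n p (int (Suc i)) = min (int (sum_list p)) (comp n v (int (Suc i)) + Qf n (int (Suc i)) v p)"
    by (rule QA_good[OF g])
  moreover have "0 \<le> comp n p (int (Suc i))" by (rule comp_nonneg)
  ultimately show ?thesis using snd_Rmap_nth[OF i] comp_nth[OF i] by simp
qed

lemma cons_nth:
  assumes g: "good n v p" and i: "i < n+1"
  shows "fst (Rmap n v p) ! i + snd (Rmap n v p) ! i = p ! i + v ! i"
  using q_int[OF g i] v_int[OF g i] by simp

lemma Q0:
  assumes g: "good n v p"
  shows "Qf n 0 v p = int (sum_list p) - int (p ! 0)"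
proof -
  have "Qf n (1 - 1) v p + comp n p 1 = min (int (sum_list p)) (comp n v 1 + Qf n 1 v p)"
    by (rule QA_good[OF g])
  moreover have "comp n v 1 = int (v ! 0)" "comp n p 1 = int (p ! 0)" by (simp_all add: comp_def)
  moreover have "0 \<le> Qf n 1 v p" by (rule Q_nonneg)
  ultimately show ?thesis using g unfolding good_def by simp
qed

lemma telescope_q:
  assumes g: "good n v p" and e: "e \<le> n+1"
  shows "(\<Sum>i=1..e. int (fst (Rmap n v p) ! (i - 1)))
         = (\<Sum>i=1..e. int (p ! (i - 1))) + Qf n 0 v p - Qf n (int e) v p"
  using e
proof (induction e)
  case 0 then show ?case by simp
next
  case (Suc e)
  then have "e < n+1" by simp
  then show ?case using Suc q_int[OF g, of e] by simp
qed

lemma sum_list_1N: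
  assumes "length xs = n+1"
  shows "int (sum_list xs) = (\<Sum>i=1..n+1. int (xs ! (i - 1)))"
proof -
  have "(\<Sum>i=1..n+1. int (xs ! (i - 1))) = (\<Sum>i<n+1. int (xs ! i))"
    using sum.atLeast1_atMost_eq[of "\<lambda>i. int (xs ! (i - 1))" "n+1"] by simp
  also have "\<dots> = int (sum_list xs)"
    using assms by (simp add: sum_list_sum_nth atLeast0LessThan)
  finally show ?thesis by simp
qed

lemma sum_q:
  assumes g: "good n v p"
  shows "sum_list (fst (Rmap n v p)) = sum_list p"
proof -
  have "int (sum_list (fst (Rmap n v p))) = (\<Sum>i=1..n+1. int (fst (Rmap n v p) ! (i - 1)))"
    by (rule sum_list_1N) (simp add: length_Rmap)
  also have "\<dots> = (\<Sum>i=1..n+1. int (p ! (i - 1))) + Qf n 0 v p - Qf n (int (n+1)) v p"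
    using telescope_q[OF g, of "n+1"] by (simp del: sum.cl_ivl_Suc)
  also have "Qf n (int (n+1)) v p = Qf n 0 v p" using Qf_per[of n 0 v p] by simp
  also have "(\<Sum>i=1..n+1. int (p ! (i - 1))) = int (sum_list p)"
    using g unfolding good_def by (simp add: sum_list_1N)
  finally show ?thesis by simp
qed

lemma local_id:
  assumes g: "good n v p" and d: "2 \<le> d" "d \<le> n+1"
  shows "min (int (v ! (d - 1)) - int (fst (Rmap n v p) ! (d - 1)))
             ((\<Sum>i=1..d-1. int (fst (Rmap n v p) ! (i - 1))) - (\<Sum>i=2..d. int (p ! (i - 1)))) = 0"
proof -
  let ?Q = "\<lambda>i. Qf n i v p"
  have t: "(\<Sum>i=1..d-1. int (fst (Rmap n v p) ! (i - 1))) = (\<Sum>i=1..d-1. int (p ! (i - 1))) + ?Q 0 - ?Q (int (d-1))"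
    using telescope_q[OF g, of "d-1"] d by simp
  have s1: "(\<Sum>i=1..d. int (p ! (i - 1))) = (\<Sum>i=1..d-1. int (p ! (i - 1))) + int (p ! (d-1))"
    using sum.cl_ivl_Suc[of "\<lambda>i. int (p ! (i - 1))" 1 "d-1"] d by simp
  have s2: "(\<Sum>i=1..d. int (p ! (i - 1))) = int (p ! 0) + (\<Sum>i=2..d. int (p ! (i - 1)))"
    using d by (simp add: sum.atLeast_Suc_atMost numeral_2_eq_2)
  have qd: "int (fst (Rmap n v p) ! (d - 1)) = int (p ! (d-1)) + ?Q (int (d-1)) - ?Q (int d)"
    using q_int[OF g, of "d-1"] d by simp
  have a: "?Q (int d - 1) + comp n p (int d) = min (int (sum_list p)) (comp n v (int d) + ?Q (int d))"
    by (rule QA_good[OF g])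
  have cp: "comp n p (int d) = int (p ! (d-1))" "comp n v (int d) = int (v ! (d-1))"
  proof -
    have e: "int d = int (Suc (d-1))" "d - 1 < n+1" using d by simp_all
    show "comp n p (int d) = int (p ! (d-1))" unfolding e(1) by (rule comp_nth[OF e(2)])
    show "comp n v (int d) = int (v ! (d-1))" unfolding e(1) by (rule comp_nth[OF e(2)])
  qed
  have dd: "int d - 1 = int (d - 1)" using d by simp
  have a': "?Q (int (d - 1)) + int (p ! (d-1)) = min (int (sum_list p)) (int (v ! (d-1)) + ?Q (int d))"
    using a unfolding cp dd .
  have q0: "?Q 0 = int (sum_list p) - int (p ! 0)" by (rule Q0[OF g])
  show ?thesis
  proof (cases "int (sum_list p) \<le> int (v ! (d-1)) + ?Q (int d)")
    case True
    then have "?Q (int (d - 1)) + int (p ! (d-1)) = int (sum_list p)" using a' by simp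
    then show ?thesis using t s1 s2 qd q0 True by linarith
  next
    case False
    then have "?Q (int (d - 1)) + int (p ! (d-1)) = int (v ! (d-1)) + ?Q (int d)" using a' by simp
    then show ?thesis using t s1 s2 qd q0 False by linarith
  qed
qed

lemma carrier_first:
  assumes g: "good n v p"
  shows "v ! 0 \<le> snd (Rmap n v p) ! 0 + sum_list p"
proof -
  have "int (snd (Rmap n v p) ! 0) = int (v ! 0) + Qf n 1 v p - Qf n 0 v p"
    using v_int[OF g, of 0] by simp
  moreover have "0 \<le> Qf n 1 v p" by (rule Q_nonneg)
  moreover have "Qf n 0 v p \<le> int (sum_list p)" using Q_leM g unfolding good_def by blast
  ultimately show ?thesis by simp
qed

lemma vac_pass:
  assumes g: "good n v p" and z: "\<forall>i\<in>{1..n}. v ! i = 0" and i: "i \<in> {1..n}"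
  shows "snd (Rmap n v p) ! i = p ! i"
proof -
  have il: "i < n+1" using i by simp
  have a: "Qf n (int (Suc i) - 1) v p + comp n p (int (Suc i)) = min (int (sum_list p)) (comp n v (int (Suc i)) + Qf n (int (Suc i)) v p)"
    by (rule QA_good[OF g])
  have "Qf n (int (Suc i)) v p \<le> int (sum_list p)" using Q_leM g unfolding good_def by blast
  then show ?thesis using a v_int[OF g il] comp_nth[OF il, of v] comp_nth[OF il, of p] z i by simp
qed



lemma neg_mod:
  assumes "j < n+1"
  shows "nat ((- int j - 1) mod int (n+1)) = n - j"
proof -
  have "(- int j - 1) mod int (n+1) = (- int j - 1 + int (n+1)) mod int (n+1)"
    by (rule mod_add_self2[symmetric])
  also have "- int j - 1 + int (n+1) = int (n - j)" using assms by simp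
  also have "int (n - j) mod int (n+1) = int (n - j)" using assms by simp
  finally show ?thesis by simp
qed

lemma Q_inv:
  assumes gv: "good n v p" and gw: "good n w p" and eq: "\<forall>i\<in>{1..n}. v ! i = w ! i"
    and i: "0 \<le> i" "i \<le> int (n+1)"
  shows "Qf n i v p = Qf n i w p"
proof -
  have neg: "Qf n (- int j) v p = Qf n (- int j) w p" if "j \<le> n" for j
    using that
  proof (induction j)
    case 0 then show ?case using Q0[OF gv] Q0[OF gw] by simp
  next
    case (Suc j)
    then have jn: "j < n+1" "j \<le> n" by simp_all
    have cv: "comp n v (- int j) = comp n w (- int j)"
      unfolding comp_def neg_mod[OF jn(1)] using eq Suc.prems by simp
    have a1: "Qf n (- int j - 1) v p + comp n p (- int j) = min (int (sum_list p)) (comp n v (- int j) + Qf n (- int j) v p)"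
      by (rule QA_good[OF gv])
    have a2: "Qf n (- int j - 1) w p + comp n p (- int j) = min (int (sum_list p)) (comp n w (- int j) + Qf n (- int j) w p)"
      by (rule QA_good[OF gw])
    have e: "- int (Suc j) = - int j - 1" by simp
    have "Qf n (- int j - 1) v p = Qf n (- int j - 1) w p" using a1 a2 cv Suc.IH[OF jn(2)] by simp
    then show ?case unfolding e .
  qed
  show ?thesis
  proof (cases "i = 0")
    case True then show ?thesis using neg[of 0] by simp
  next
    case False
    define j where "j = nat (int (n+1) - i)"
    have j: "j \<le> n" "i - int (n+1) = - int j" using i False unfolding j_def by auto
    have "Qf n i v p = Qf n (i - int (n+1)) v p" using Qf_per[of n "i - int (n+1)" v p] by simp
    moreover have "Qf n i w p = Qf n (i - int (n+1)) w p" using Qf_per[of n "i - int (n+1)" w p] by simp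
    ultimately show ?thesis using neg[OF j(1)] j(2) by simp
  qed
qed

lemma Rmap_inv:
  assumes gv: "good n v p" and gw: "good n w p" and eq: "\<forall>i\<in>{1..n}. v ! i = w ! i"
  shows "fst (Rmap n v p) = fst (Rmap n w p)"
    and "\<forall>i\<in>{1..n}. snd (Rmap n v p) ! i = snd (Rmap n w p) ! i"
proof -
  have qi: "Qf n (int i) v p = Qf n (int i) w p" if "i \<le> n+1" for i
    using Q_inv[OF gv gw eq] that by simp
  show "fst (Rmap n v p) = fst (Rmap n w p)"
  proof (rule nth_equalityI)
    show "length (fst (Rmap n v p)) = length (fst (Rmap n w p))" by (simp add: length_Rmap)
    fix i assume "i < length (fst (Rmap n v p))"
    then have i: "i < n+1" by (simp add: length_Rmap)
    show "fst (Rmap n v p) ! i = fst (Rmap n w p) ! i"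
      unfolding fst_Rmap_nth[OF i] using qi[of i] qi[of "Suc i"] i by simp
  qed
  show "\<forall>i\<in>{1..n}. snd (Rmap n v p) ! i = snd (Rmap n w p) ! i"
  proof
    fix i assume ii: "i \<in> {1..n}"
    then have i: "i < n+1" by simp
    show "snd (Rmap n v p) ! i = snd (Rmap n w p) ! i"
      unfolding snd_Rmap_nth[OF i] comp_nth[OF i] using qi[of i] qi[of "Suc i"] i eq ii by simp
  qed
qed



fun carrs :: "nat \<Rightarrow> nat list \<Rightarrow> nat list list \<Rightarrow> nat list list" where
  "carrs n v [] = [v]"
| "carrs n v (p # ps) = v # carrs n (snd (Rmap n v p)) ps"

lemma Tcar_cons: "Tcar n v (p # ps) = fst (Rmap n v p) # Tcar n (snd (Rmap n v p)) ps"
  by (simp add: split_beta)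

declare Tcar.simps(2)[simp del]

lemma length_carrs: "length (carrs n v ps) = Suc (length ps)"
  by (induction ps arbitrary: v) auto

lemma length_Tcar: "length (Tcar n v ps) = length ps"
  by (induction ps arbitrary: v) (auto simp: Tcar_cons)

lemma carrs_0: "carrs n v ps ! 0 = v"
  by (cases ps) auto

lemma Tcar_nth: "j < length ps \<Longrightarrow> Tcar n v ps ! j = fst (Rmap n (carrs n v ps ! j) (ps ! j))"
proof (induction ps arbitrary: v j)
  case Nil then show ?case by simp
next
  case (Cons p ps)
  then show ?case by (cases j) (auto simp: Tcar_cons carrs_0)
qed

lemma carrs_Suc: "j < length ps \<Longrightarrow> carrs n v ps ! Suc j = snd (Rmap n (carrs n v ps ! j) (ps ! j))"
proof (induction ps arbitrary: v j)
  case Nil then show ?case by simp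
next
  case (Cons p ps)
  then show ?case by (cases j) (auto simp: carrs_0)
qed

definition wfs :: "nat \<Rightarrow> nat list list \<Rightarrow> bool" where
  "wfs n ps \<longleftrightarrow> (\<forall>p\<in>set ps. length p = n+1)"

definition tot :: "nat list list \<Rightarrow> nat" where
  "tot ps = sum_list (map sum_list ps)"

lemma length_uvac: "length (uvac n l) = n+1" by (simp add: uvac_def)
lemma uvac_0: "uvac n l ! 0 = l" by (simp add: uvac_def)
lemma uvac_i: "i \<in> {1..n} \<Longrightarrow> uvac n l ! i = 0" by (cases i) (auto simp: uvac_def)

lemma Tcar_stab:
  assumes "1 \<le> n" "wfs n ps" "length v = n+1" "length w = n+1"
    "\<forall>i\<in>{1..n}. v ! i = w ! i" "tot ps \<le> v ! 0" "tot ps \<le> w ! 0"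
  shows "Tcar n v ps = Tcar n w ps"
  using assms
proof (induction ps arbitrary: v w)
  case Nil then show ?case by simp
next
  case (Cons p ps)
  have lp: "length p = n+1" using Cons.prems(2) by (simp add: wfs_def)
  have gv: "good n v p" using Cons.prems lp by (simp add: good_def tot_def)
  have gw: "good n w p" using Cons.prems lp by (simp add: good_def tot_def)
  have f: "fst (Rmap n v p) = fst (Rmap n w p)" by (rule Rmap_inv(1)[OF gv gw Cons.prems(5)])
  have s: "\<forall>i\<in>{1..n}. snd (Rmap n v p) ! i = snd (Rmap n w p) ! i" by (rule Rmap_inv(2)[OF gv gw Cons.prems(5)])
  have cv: "v ! 0 \<le> snd (Rmap n v p) ! 0 + sum_list p" by (rule carrier_first[OF gv])
  have cw: "w ! 0 \<le> snd (Rmap n w p) ! 0 + sum_list p" by (rule carrier_first[OF gw])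
  have "Tcar n (snd (Rmap n v p)) ps = Tcar n (snd (Rmap n w p)) ps"
    apply (rule Cons.IH)
    using Cons.prems cv cw s by (auto simp: wfs_def tot_def length_Rmap)
  then show ?case by (simp add: Tcar_cons f)
qed

lemma Tinf_eq:
  assumes "1 \<le> n" "wfs n ps"
  shows "Tinf n ps = Tl n (tot ps) ps"
proof -
  have stab: "Tl n l ps = Tl n (tot ps) ps" if "tot ps \<le> l" for l
    unfolding Tl_def
    by (rule Tcar_stab) (use assms that in \<open>auto simp: length_uvac uvac_0 uvac_i\<close>)
  show ?thesis unfolding Tinf_def
  proof (rule the_equality)
    show "\<exists>l0. \<forall>l\<ge>l0. Tl n l ps = Tl n (tot ps) ps" using stab by blast
  next
    fix q assume "\<exists>l0. \<forall>l\<ge>l0. Tl n l ps = q"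
    then obtain l0 where "\<forall>l\<ge>l0. Tl n l ps = q" by blast
    then have "Tl n (max l0 (tot ps)) ps = q" by simp
    then show "q = Tl n (tot ps) ps" using stab[of "max l0 (tot ps)"] by simp
  qed
qed

lemma tot_drop: "j < length ps \<Longrightarrow> tot (drop j ps) = sum_list (ps ! j) + tot (drop (Suc j) ps)"
  by (simp add: tot_def Cons_nth_drop_Suc[symmetric])

context
  fixes n :: nat and ps :: "nat list list"
  assumes n1: "1 \<le> n" and wf: "wfs n ps"
begin

definition cc :: "nat \<Rightarrow> nat list" where
  "cc j = carrs n (uvac n (tot ps)) ps ! j"

lemma Tinf_nth: "j < length ps \<Longrightarrow> Tinf n ps ! j = fst (Rmap n (cc j) (ps ! j))"
  using Tinf_eq[OF n1 wf] by (simp add: Tl_def Tcar_nth cc_def)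

lemma length_Tinf: "length (Tinf n ps) = length ps"
  using Tinf_eq[OF n1 wf] by (simp add: Tl_def length_Tcar)

lemma cc_Suc: "j < length ps \<Longrightarrow> cc (Suc j) = snd (Rmap n (cc j) (ps ! j))"
  by (simp add: cc_def carrs_Suc)

lemma cc_0: "cc 0 = uvac n (tot ps)"
  by (simp add: cc_def carrs_0)

lemma cc_bound: "j \<le> length ps \<Longrightarrow> length (cc j) = n+1 \<and> tot (drop j ps) \<le> cc j ! 0"
proof (induction j)
  case 0 then show ?case by (simp add: cc_0 length_uvac uvac_0)
next
  case (Suc j)
  then have j: "j < length ps" by simp
  have lp: "length (ps ! j) = n+1" using wf j by (simp add: wfs_def)
  have g: "good n (cc j) (ps ! j)" using Suc j n1 lp tot_drop[OF j] by (simp add: good_def)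
  show ?case using carrier_first[OF g] tot_drop[OF j] Suc j
    by (simp add: cc_Suc[OF j] length_Rmap)
qed

lemma good_cc: "j < length ps \<Longrightarrow> good n (cc j) (ps ! j)"
  using cc_bound[of j] tot_drop[of j ps] n1 wf by (auto simp: good_def wfs_def)

lemma wfs_Tinf: "wfs n (Tinf n ps)"
  unfolding wfs_def
proof
  fix q assume "q \<in> set (Tinf n ps)"
  then obtain j where j: "j < length ps" "q = Tinf n ps ! j" by (auto simp: in_set_conv_nth length_Tinf)
  then show "length q = n+1" by (simp add: Tinf_nth length_Rmap)
qed

lemma sum_Tinf: "j < length ps \<Longrightarrow> sum_list (Tinf n ps ! j) = sum_list (ps ! j)"
  by (simp add: Tinf_nth sum_q good_cc)

lemma prefix:
  assumes i: "i \<in> {1..n}" and j: "j \<le> length ps"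
  shows "(\<Sum>j'<j. Tinf n ps ! j' ! i) + cc j ! i = (\<Sum>j'<j. ps ! j' ! i)"
  using j
proof (induction j)
  case 0 then show ?case using i by (simp add: cc_0 uvac_i)
next
  case (Suc j)
  then have jl: "j < length ps" by simp
  have il: "i < n+1" using i by simp
  have "Tinf n ps ! j ! i + cc (Suc j) ! i = ps ! j ! i + cc j ! i"
    unfolding Tinf_nth[OF jl] cc_Suc[OF jl] by (rule cons_nth[OF good_cc[OF jl] il])
  then show ?case using Suc by simp
qed

end



definition wt :: "nat \<Rightarrow> nat list \<Rightarrow> nat" where
  "wt n p = (\<Sum>i\<in>{1..n}. p ! i)"

definition Phi :: "nat \<Rightarrow> nat list list \<Rightarrow> nat" where
  "Phi n ps = (\<Sum>k\<in>{1..length ps}. \<Sum>j<k. wt n (ps ! j))"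

lemma wt_zero: "wt n p = 0 \<Longrightarrow> i \<in> {1..n} \<Longrightarrow> p ! i = 0"
  unfolding wt_def by simp

lemma Phi_zero: "Phi n ps = 0 \<Longrightarrow> j < length ps \<Longrightarrow> wt n (ps ! j) = 0"
proof -
  assume z: "Phi n ps = 0" and j: "j < length ps"
  have "Suc j \<in> {1..length ps}" using j by simp
  have a: "wt n (ps ! j) \<le> (\<Sum>j'<Suc j. wt n (ps ! j'))" by (rule member_le_sum) auto
  have b: "(\<Sum>j'<Suc j. wt n (ps ! j')) \<le> Phi n ps" unfolding Phi_def
    by (rule member_le_sum[where f="\<lambda>k. \<Sum>j<k. wt n (ps ! j)"]) (use j in auto)
  show ?thesis using a b z by simp
qed

lemma Phi_nz: "\<forall>j<length ps. wt n (ps ! j) = 0 \<Longrightarrow> Phi n ps = 0"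
  unfolding Phi_def by simp

context
  fixes n :: nat and ps :: "nat list list"
  assumes n1: "1 \<le> n" and wf: "wfs n ps"
begin

lemma prefix_wt:
  assumes j: "j \<le> length ps"
  shows "(\<Sum>j'<j. wt n (Tinf n ps ! j')) + wt n (cc n ps j) = (\<Sum>j'<j. wt n (ps ! j'))"
proof -
  have "(\<Sum>i\<in>{1..n}. (\<Sum>j'<j. Tinf n ps ! j' ! i) + cc n ps j ! i) = (\<Sum>i\<in>{1..n}. \<Sum>j'<j. ps ! j' ! i)"
    by (rule sum.cong) (simp_all add: prefix[OF n1 wf _ j])
  moreover have "(\<Sum>j'<j. wt n (Tinf n ps ! j')) = (\<Sum>i\<in>{1..n}. \<Sum>j'<j. Tinf n ps ! j' ! i)"
    unfolding wt_def by (rule sum.swap)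
  moreover have "(\<Sum>j'<j. wt n (ps ! j')) = (\<Sum>i\<in>{1..n}. \<Sum>j'<j. ps ! j' ! i)"
    unfolding wt_def by (rule sum.swap)
  ultimately show ?thesis unfolding sum.distrib wt_def by simp
qed

lemma Phi_step: "Phi n (Tinf n ps) + (\<Sum>k\<in>{1..length ps}. wt n (cc n ps k)) = Phi n ps"
proof -
  have "Phi n (Tinf n ps) + (\<Sum>k\<in>{1..length ps}. wt n (cc n ps k))
      = (\<Sum>k\<in>{1..length ps}. (\<Sum>j<k. wt n (Tinf n ps ! j)) + wt n (cc n ps k))"
    unfolding Phi_def length_Tinf[OF n1 wf] sum.distrib ..
  also have "\<dots> = Phi n ps"
    unfolding Phi_def by (rule sum.cong) (simp_all add: prefix_wt)
  finally show ?thesis .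
qed

lemma nonvac:
  assumes j: "j < length ps" and nz: "wt n (ps ! j) \<noteq> 0"
  shows "\<exists>k\<in>{1..length ps}. wt n (cc n ps k) \<noteq> 0"
proof (rule ccontr)
  assume "\<not> ?thesis"
  then have z: "\<And>k. k \<in> {1..length ps} \<Longrightarrow> wt n (cc n ps k) = 0" by blast
  have zj: "wt n (cc n ps j) = 0"
  proof (cases j)
    case 0 then show ?thesis by (simp add: cc_0[OF n1 wf] wt_def uvac_i)
  next
    case (Suc m) then show ?thesis using z j by simp
  qed
  have zs: "wt n (cc n ps (Suc j)) = 0" using z j by simp
  have "\<forall>i\<in>{1..n}. cc n ps j ! i = 0" using wt_zero[OF zj] by blast
  then have "\<And>i. i \<in> {1..n} \<Longrightarrow> cc n ps (Suc j) ! i = ps ! j ! i"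
    using vac_pass[OF good_cc[OF n1 wf j]] cc_Suc[OF n1 wf j] by simp
  then have "\<And>i. i \<in> {1..n} \<Longrightarrow> ps ! j ! i = 0" using wt_zero[OF zs] by metis
  then have "wt n (ps ! j) = 0" unfolding wt_def by simp
  then show False using nz by simp
qed

lemma Phi_le: "Phi n (Tinf n ps) \<le> Phi n ps"
  by (metis Phi_step le_add1)

lemma Phi_less:
  assumes "Phi n ps \<noteq> 0"
  shows "Phi n (Tinf n ps) < Phi n ps"
proof -
  have "\<exists>j<length ps. wt n (ps ! j) \<noteq> 0"
  proof (rule ccontr)
    assume "\<not> ?thesis"
    then have "\<forall>j<length ps. wt n (ps ! j) = 0" by simp
    then show False using assms Phi_nz[of ps n] by simp
  qed
  then obtain j where j: "j < length ps" "wt n (ps ! j) \<noteq> 0" by blast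
  from nonvac[OF j] obtain k where k: "k \<in> {1..length ps}" "wt n (cc n ps k) \<noteq> 0" ..
  have le: "wt n (cc n ps k) \<le> (\<Sum>k\<in>{1..length ps}. wt n (cc n ps k))"
    by (rule member_le_sum) (use k(1) in simp_all)
  have h: "\<And>a s p w::nat. a + s = p \<Longrightarrow> w \<noteq> 0 \<Longrightarrow> w \<le> s \<Longrightarrow> a < p" by simp
  show ?thesis by (rule h[OF Phi_step k(2) le])
qed

end

lemma iter_wf:
  assumes "1 \<le> n" "wfs n ps"
  shows "wfs n ((Tinf n ^^ t) ps) \<and> length ((Tinf n ^^ t) ps) = length ps"
proof (induction t)
  case 0 then show ?case using assms by simp
next
  case (Suc t) then show ?case using assms wfs_Tinf length_Tinf by simp
qed

lemma iter_phi:
  assumes n1: "1 \<le> n" and wf: "wfs n ps"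
  shows "Phi n ((Tinf n ^^ t) ps) + t \<le> Phi n ps \<or> Phi n ((Tinf n ^^ t) ps) = 0"
proof (induction t)
  case 0 then show ?case by simp
next
  case (Suc t)
  let ?P = "(Tinf n ^^ t) ps"
  have w: "wfs n ?P" using iter_wf[OF assms] by blast
  show ?case
  proof (cases "Phi n ?P = 0")
    case True
    then have "Phi n (Tinf n ?P) = 0" using Phi_le[OF n1 w] by simp
    then show ?thesis by simp
  next
    case False
    then have "Phi n (Tinf n ?P) < Phi n ?P" by (rule Phi_less[OF n1 w])
    then show ?thesis using Suc False by simp
  qed
qed

lemma rho_term_zero:
  assumes n1: "1 \<le> n" and wf: "wfs n ps" and k: "k \<le> length ps" and t: "Phi n ps < t"
  shows "rho_term n ps k t = 0"
proof -
  let ?P = "(Tinf n ^^ t) ps"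
  have w: "length ?P = length ps" using iter_wf[OF n1 wf] by blast
  have z: "Phi n ?P = 0" using iter_phi[OF n1 wf, of t] t by linarith
  have "xt n ps t j i = 0" if "j \<in> {1..k}" "i \<in> {2..n+1}" for j i
  proof -
    have jl: "j - 1 < length ?P" using that k w by auto
    have "wt n (?P ! (j - 1)) = 0" by (rule Phi_zero[OF z jl])
    moreover have "i - 1 \<in> {1..n}" using that by auto
    ultimately have "?P ! (j - 1) ! (i - 1) = 0" by (rule wt_zero)
    then show ?thesis by (simp add: xt_def)
  qed
  then show ?thesis unfolding rho_term_def by simp
qed



lemma F_shift:
  fixes g :: "nat \<Rightarrow> int"
  assumes z: "\<And>t. B \<le> t \<Longrightarrow> g t = 0" and B: "1 \<le> B"
  shows "(\<Sum>t\<in>{t. 1 \<le> t \<and> g t \<noteq> 0}. g t) = g 1 + (\<Sum>t\<in>{t. 1 \<le> t \<and> g (Suc t) \<noteq> 0}. g (Suc t))"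
proof -
  have e1: "(\<Sum>t\<in>{t. 1 \<le> t \<and> g t \<noteq> 0}. g t) = (\<Sum>t\<in>{1..B}. g t)"
  proof (rule sum.mono_neutral_left)
    show "{t. 1 \<le> t \<and> g t \<noteq> 0} \<subseteq> {1..B}"
    proof
      fix x assume x: "x \<in> {t. 1 \<le> t \<and> g t \<noteq> 0}"
      have "\<not> B \<le> x" using z x by auto
      then show "x \<in> {1..B}" using x by simp
    qed
  qed auto
  have e2: "(\<Sum>t\<in>{t. 1 \<le> t \<and> g (Suc t) \<noteq> 0}. g (Suc t)) = (\<Sum>t\<in>{1..B}. g (Suc t))"
  proof (rule sum.mono_neutral_left)
    show "{t. 1 \<le> t \<and> g (Suc t) \<noteq> 0} \<subseteq> {1..B}"
    proof
      fix x assume x: "x \<in> {t. 1 \<le> t \<and> g (Suc t) \<noteq> 0}"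
      have "\<not> B \<le> Suc x" using z x by auto
      then show "x \<in> {1..B}" using x by simp
    qed
  qed auto
  have e3: "(\<Sum>t\<in>{1..B}. g (Suc t)) = (\<Sum>t\<in>{Suc 1..Suc B}. g t)"
    by (rule sum.shift_bounds_cl_Suc_ivl[symmetric])
  have e4: "(\<Sum>t\<in>{Suc 1..Suc B}. g t) = (\<Sum>t\<in>{Suc 1..B}. g t)"
    using z[of "Suc B"] B by simp
  have e5: "(\<Sum>t\<in>{1..B}. g t) = g 1 + (\<Sum>t\<in>{Suc 1..B}. g t)"
    using B by (simp add: sum.atLeast_Suc_atMost)
  show ?thesis using e1 e2 e3 e4 e5 by simp
qed

definition AA :: "nat list list \<Rightarrow> nat \<Rightarrow> nat \<Rightarrow> int" where
  "AA xs k d = (\<Sum>j=1..k. \<Sum>i=2..d. int (xs ! (j - 1) ! (i - 1)))"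

definition FF :: "nat \<Rightarrow> nat list list \<Rightarrow> nat \<Rightarrow> int" where
  "FF n xs k = (\<Sum>t\<in>{t. 1 \<le> t \<and> rho_term n xs k t \<noteq> 0}. rho_term n xs k t)"

lemma rho_eq: "d \<noteq> 0 \<Longrightarrow> rho n xs k d = AA xs k d + FF n xs k"
  by (simp add: rho_def AA_def FF_def xt_def)

lemma rho_term_Suc: "rho_term n xs k (Suc t) = rho_term n (Tinf n xs) k t"
  by (simp add: rho_term_def xt_def funpow_Suc_right del: funpow.simps)

lemma rho_term_1: "rho_term n xs k 1 = AA (Tinf n xs) k (n+1)"
  by (simp add: rho_term_def xt_def AA_def)

lemma FF_rel:
  assumes n1: "1 \<le> n" and wf: "wfs n ps" and k: "k \<le> length ps"
  shows "FF n ps k = AA (Tinf n ps) k (n+1) + FF n (Tinf n ps) k"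
proof -
  have "FF n ps k = rho_term n ps k 1 + (\<Sum>t\<in>{t. 1 \<le> t \<and> rho_term n ps k (Suc t) \<noteq> 0}. rho_term n ps k (Suc t))"
    unfolding FF_def
    by (rule F_shift[where B="Suc (Phi n ps)"]) (use rho_term_zero[OF n1 wf k] in auto)
  then show ?thesis unfolding rho_term_1 rho_term_Suc FF_def .
qed

lemma AA_Suc_k: "AA xs (Suc K) d = AA xs K d + (\<Sum>i=2..d. int (xs ! K ! (i - 1)))"
  by (simp add: AA_def)

lemma AA_Suc_d:
  assumes "1 \<le> e"
  shows "AA xs K (Suc e) = AA xs K e + (\<Sum>j=1..K. int (xs ! (j - 1) ! e))"
proof -
  have "\<And>j. (\<Sum>i=2..Suc e. int (xs ! (j - 1) ! (i - 1))) = (\<Sum>i=2..e. int (xs ! (j - 1) ! (i - 1))) + int (xs ! (j - 1) ! e)"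
    using assms by simp
  then show ?thesis unfolding AA_def by (simp add: sum.distrib)
qed

lemma sum_shift0:
  fixes f :: "nat \<Rightarrow> int"
  shows "(\<Sum>j=1..K. f (j - 1)) = (\<Sum>j<K. f j)"
  using sum.atLeast1_atMost_eq[of "\<lambda>j. f (j - 1)" K] by simp

theorem proposition4p2:
  fixes n :: nat and ps :: "nat list list" and k d :: nat
  assumes "1 \<le> n"
    and "\<forall>p \<in> set ps. length p = n + 1 \<and> 1 \<le> sum_list p"
    and "1 \<le> k" and "k \<le> length ps"
    and "2 \<le> d" and "d \<le> n + 1"
  shows "rho n (Tinf n ps) k (d - 1) + rho n ps (k - 1) d
         = max (rho n (Tinf n ps) k d + rho n ps (k - 1) (d - 1))
               (rho n (Tinf n ps) (k - 1) (d - 1) + rho n ps k d - int (sum_list (ps ! (k - 1))))"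
proof -
  note n1 = assms(1)
  have wf: "wfs n ps" using assms(2) by (simp add: wfs_def)
  define K where "K = k - 1"
  have kK: "k = Suc K" using assms(3) unfolding K_def by simp
  have KL: "K < length ps" using assms(4) kK by simp
  define e where "e = d - 1"
  have de: "d = Suc e" "1 \<le> e" "e \<le> n" using assms(5,6) unfolding e_def by auto
  define qs where "qs = Tinf n ps"
  define v where "v = cc n ps K"
  define p where "p = ps ! K"
  define q where "q = qs ! K"
  have g: "good n v p" unfolding v_def p_def by (rule good_cc[OF n1 wf KL])
  have qR: "q = fst (Rmap n v p)" unfolding q_def qs_def v_def p_def by (rule Tinf_nth[OF n1 wf KL])
  have lq: "length q = n+1" using qR by (simp add: length_Rmap)
  have sq: "sum_list q = sum_list p" using qR sum_q[OF g] by simp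
  have lp: "length p = n+1" using g by (simp add: good_def)
  have r1: "rho n qs k e = AA qs k e + FF n qs k" using de by (simp add: rho_eq)
  have r2: "rho n ps K d = AA ps K d + FF n ps K" using de by (simp add: rho_eq)
  have r3: "rho n qs k d = AA qs k d + FF n qs k" using de by (simp add: rho_eq)
  have r4: "rho n ps K e = AA ps K e + FF n ps K" using de by (simp add: rho_eq)
  have r5: "rho n qs K e = AA qs K e + FF n qs K" using de by (simp add: rho_eq)
  have r6: "rho n ps k d = AA ps k d + FF n ps k" using de by (simp add: rho_eq)
  have f1: "FF n ps K = AA qs K (n+1) + FF n qs K"
    unfolding qs_def using FF_rel[OF n1 wf] KL by simp
  have f2: "FF n ps k = AA qs k (n+1) + FF n qs k"
    unfolding qs_def using FF_rel[OF n1 wf] assms(4) by simp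
  have a1: "AA qs k e = AA qs K e + (\<Sum>i=2..e. int (q ! (i - 1)))"
    unfolding kK q_def by (rule AA_Suc_k)
  have a2: "AA qs k d = AA qs K d + (\<Sum>i=2..d. int (q ! (i - 1)))"
    unfolding kK q_def by (rule AA_Suc_k)
  have a3: "AA ps k d = AA ps K d + (\<Sum>i=2..d. int (p ! (i - 1)))"
    unfolding kK p_def by (rule AA_Suc_k)
  have a4: "AA qs k (n+1) = AA qs K (n+1) + (\<Sum>i=2..n+1. int (q ! (i - 1)))"
    unfolding kK q_def by (rule AA_Suc_k)
  have a5: "AA qs K d = AA qs K e + (\<Sum>j=1..K. int (qs ! (j - 1) ! e))"
    unfolding de(1) by (rule AA_Suc_d[OF de(2)])
  have a6: "AA ps K d = AA ps K e + (\<Sum>j=1..K. int (ps ! (j - 1) ! e))"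
    unfolding de(1) by (rule AA_Suc_d[OF de(2)])
  have a7: "(\<Sum>i=2..d. int (q ! (i - 1))) = (\<Sum>i=2..e. int (q ! (i - 1))) + int (q ! e)"
    unfolding de(1) using de(2) by simp
  have a8: "(\<Sum>i=1..n+1. int (q ! (i - 1))) = int (q ! 0) + (\<Sum>i=2..n+1. int (q ! (i - 1)))"
    by (simp add: sum.atLeast_Suc_atMost numeral_2_eq_2)
  have a9: "int (sum_list q) = (\<Sum>i=1..n+1. int (q ! (i - 1)))" by (rule sum_list_1N[OF lq])
  have a10: "(\<Sum>i=1..e. int (q ! (i - 1))) = int (q ! 0) + (\<Sum>i=2..e. int (q ! (i - 1)))"
    using de(2) by (simp add: sum.atLeast_Suc_atMost numeral_2_eq_2)
  have pre: "(\<Sum>j'<K. Tinf n ps ! j' ! e) + cc n ps K ! e = (\<Sum>j'<K. ps ! j' ! e)"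
    by (rule prefix[OF n1 wf]) (use de KL in auto)
  have pre': "(\<Sum>j=1..K. int (qs ! (j - 1) ! e)) + int (v ! e) = (\<Sum>j=1..K. int (ps ! (j - 1) ! e))"
  proof -
    have "int ((\<Sum>j'<K. Tinf n ps ! j' ! e) + cc n ps K ! e) = int (\<Sum>j'<K. ps ! j' ! e)"
      using pre by simp
    then show ?thesis unfolding qs_def v_def of_nat_add of_nat_sum
      using sum_shift0[of "\<lambda>j. int (Tinf n ps ! j ! e)" K] sum_shift0[of "\<lambda>j. int (ps ! j ! e)" K]
      by simp
  qed
  have li: "min (int (v ! (d - 1)) - int (fst (Rmap n v p) ! (d - 1)))
             ((\<Sum>i=1..d-1. int (fst (Rmap n v p) ! (i - 1))) - (\<Sum>i=2..d. int (p ! (i - 1)))) = 0"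
    by (rule local_id[OF g assms(5,6)])
  then have li': "min (int (v ! e) - int (q ! e))
             ((\<Sum>i=1..e. int (q ! (i - 1))) - (\<Sum>i=2..d. int (p ! (i - 1)))) = 0"
    unfolding qR e_def .
  have lam: "int (sum_list (ps ! K)) = int (sum_list q)" using sq unfolding p_def by simp
  show ?thesis
    unfolding qs_def[symmetric] K_def[symmetric] e_def[symmetric] lam
    using r1 r2 r3 r4 r5 r6 f1 f2 a1 a2 a3 a4 a5 a6 a7 a8 a9 a10 pre' li'
    unfolding min_def max_def by (auto split: if_splits)
qed

end
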